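(* The conjugacy growth of Thompson's group $V$ is exponential.
   Context: Let $\mathfrak{C}=\{0,1\}^\omega$ be the Cantor space with the product topology. For $w_1,w_2\in\{0,1\}^*$, a homeomorphism maps $w_1\mathfrak{C}$ rigidly to $w_2\mathfrak{C}$ if it restricts to $w_1y\mapsto w_2y$. Thompson's group $V$ is the group of homeomorphisms $v$ of $\mathfrak{C}$ such that every $x\in\mathfrak{C}$ lies in a cone $w\mathfrak{C}$ that $v$ maps rigidly onto some cone; $V$ is finitely generated. The conjugacy growth function with respect to a finite generating set sends $n$ to the number of conjugacy classes containing an element of word length at most $n$. Exponential means it is $\sim$-equivalent to $n\mapsto 2^n$, where $f\sim g$ iff $f\preccurlyeq g$ and $g\preccurlyeq f$, and $f\preccurlyeq g$ means there is $\lambda\in\mathbb{N}\setminus\{0\}$ with $f(n)\le\lambda g(\lambda n+\lambda)+\lambda$ for all $n$. *)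

theory Defs
  imports "HOL-Analysis.Analysis"
begin

type_synonym cantor = "nat \<Rightarrow> bool"

definition cantor_top :: "cantor topology" where
  "cantor_top = product_topology (\<lambda>_::nat. discrete_topology (UNIV::bool set)) UNIV"

definition prefix_app :: "bool list \<Rightarrow> cantor \<Rightarrow> cantor" where
  "prefix_app w y = (\<lambda>n. if n < length w then w ! n else y (n - length w))"

definition cone :: "bool list \<Rightarrow> cantor set" where
  "cone w = range (prefix_app w)"

definition maps_rigidly :: "(cantor \<Rightarrow> cantor) \<Rightarrow> bool list \<Rightarrow> bool list \<Rightarrow> bool" where
  "maps_rigidly v w1 w2 \<longleftrightarrow> (\<forall>y. v (prefix_app w1 y) = prefix_app w2 y)"

definition thompsonV :: "(cantor \<Rightarrow> cantor) set" where
  "thompsonV = {v. homeomorphic_map cantor_top cantor_top v \<and>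
      (\<forall>x. \<exists>w1 w2. x \<in> cone w1 \<and> maps_rigidly v w1 w2)}"

definition word_eval :: "(cantor \<Rightarrow> cantor) list \<Rightarrow> (cantor \<Rightarrow> cantor)" where
  "word_eval l = foldr (\<circ>) l id"

definition sym_gens :: "(cantor \<Rightarrow> cantor) set \<Rightarrow> (cantor \<Rightarrow> cantor) set" where
  "sym_gens S = S \<union> inv ` S"

definition generates_V :: "(cantor \<Rightarrow> cantor) set \<Rightarrow> bool" where
  "generates_V S \<longleftrightarrow> S \<subseteq> thompsonV \<and>
      thompsonV = {word_eval l | l. set l \<subseteq> sym_gens S}"

definition word_length :: "(cantor \<Rightarrow> cantor) set \<Rightarrow> (cantor \<Rightarrow> cantor) \<Rightarrow> nat" where
  "word_length S g = (LEAST n. \<exists>l. length l = n \<and> set l \<subseteq> sym_gens S \<and> word_eval l = g)"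

definition conj_class :: "(cantor \<Rightarrow> cantor) \<Rightarrow> (cantor \<Rightarrow> cantor) set" where
  "conj_class g = {k \<circ> g \<circ> inv k | k. k \<in> thompsonV}"

definition conj_growth :: "(cantor \<Rightarrow> cantor) set \<Rightarrow> nat \<Rightarrow> nat" where
  "conj_growth S n = card {conj_class g | g. g \<in> thompsonV \<and> word_length S g \<le> n}"

definition growth_le :: "(nat \<Rightarrow> nat) \<Rightarrow> (nat \<Rightarrow> nat) \<Rightarrow> bool" where
  "growth_le f g \<longleftrightarrow> (\<exists>c::nat. c > 0 \<and> (\<forall>n. f n \<le> c * g (c * n + c) + c))"

definition growth_equiv :: "(nat \<Rightarrow> nat) \<Rightarrow> (nat \<Rightarrow> nat) \<Rightarrow> bool" where
  "growth_equiv f g \<longleftrightarrow> growth_le f g \<and> growth_le g f"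

end

theory Submission
  imports Defs
begin


definition lpre :: "bool list \<Rightarrow> bool list \<Rightarrow> bool" where "lpre u w \<longleftrightarrow> (\<exists>r. w = u @ r)"


definition scons :: "bool \<Rightarrow> cantor \<Rightarrow> cantor" where
  "scons b x = (\<lambda>n. case n of 0 \<Rightarrow> b | Suc m \<Rightarrow> x m)"
definition stl :: "cantor \<Rightarrow> cantor" where "stl x = (\<lambda>n. x (Suc n))"
definition sdrop :: "nat \<Rightarrow> cantor \<Rightarrow> cantor" where "sdrop k x = (\<lambda>n. x (n + k))"
definition pfx :: "bool list \<Rightarrow> cantor \<Rightarrow> bool" where
  "pfx w x \<longleftrightarrow> (\<forall>i<length w. w ! i = x i)"
definition ptake :: "nat \<Rightarrow> cantor \<Rightarrow> bool list" where "ptake k x = map x [0..<k]"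

lemma scons_0[simp]: "scons b x 0 = b" by (simp add: scons_def)
lemma scons_Suc[simp]: "scons b x (Suc n) = x n" by (simp add: scons_def)
lemma stl_scons[simp]: "stl (scons b x) = x" by (simp add: stl_def)
lemma scons_stl[simp]: "scons (x 0) (stl x) = x"
  by (rule ext) (simp add: scons_def stl_def split: nat.split)
lemma scons_eq[simp]: "scons a x = scons b y \<longleftrightarrow> a = b \<and> x = y"
proof
  assume h: "scons a x = scons b y"
  have "a = b" using arg_cong[OF h, of "\<lambda>z. z 0"] by simp
  moreover have "x = y" using arg_cong[OF h, of stl] by simp
  ultimately show "a = b \<and> x = y" ..
qed simp
lemma prefix_app_Nil[simp]: "prefix_app [] y = y" by (simp add: prefix_app_def)
lemma prefix_app_Cons[simp]: "prefix_app (a # w) y = scons a (prefix_app w y)"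
  by (rule ext) (auto simp: prefix_app_def scons_def split: nat.split)
lemma prefix_app_append: "prefix_app (u @ w) y = prefix_app u (prefix_app w y)"
  by (induction u) auto
lemma pfx_Nil[simp]: "pfx [] x" by (simp add: pfx_def)
lemma pfx_Cons[simp]: "pfx (a # w) x \<longleftrightarrow> x 0 = a \<and> pfx w (stl x)"
  unfolding pfx_def stl_def by (simp add: All_less_Suc2) blast
lemma pfx_prefix_app[simp]: "pfx w (prefix_app w y)"
  by (induction w) auto
lemma sdrop_prefix_app[simp]: "sdrop (length w) (prefix_app w y) = y"
  by (rule ext) (simp add: sdrop_def prefix_app_def)
lemma pfx_decomp: "pfx w x \<Longrightarrow> x = prefix_app w (sdrop (length w) x)"
  by (rule ext) (auto simp: pfx_def prefix_app_def sdrop_def)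
lemma prefix_app_inj[simp]: "prefix_app w y = prefix_app w z \<longleftrightarrow> y = z"
  by (induction w) auto
lemma pfx_ptake[simp]: "pfx (ptake k x) x" by (simp add: pfx_def ptake_def)
lemma length_ptake[simp]: "length (ptake k x) = k" by (simp add: ptake_def)
lemma cone_iff: "x \<in> cone w \<longleftrightarrow> pfx w x"
proof
  assume "x \<in> cone w" then show "pfx w x" unfolding cone_def by auto
next
  assume "pfx w x" then have "x = prefix_app w (sdrop (length w) x)" by (rule pfx_decomp)
  then show "x \<in> cone w" unfolding cone_def by (metis rangeI)
qed

lemma pfx_prefix_app_long:
  "length u \<le> length w \<Longrightarrow> pfx u (prefix_app w y) \<longleftrightarrow> lpre u w"
proof (induction u arbitrary: w)
  case Nil then show ?case by (simp add: lpre_def)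
next
  case (Cons a u) then show ?case by (cases w) (auto simp: lpre_def)
qed

lemma pfx_prefix_app_short:
  "length w \<le> length u \<Longrightarrow> pfx u (prefix_app w y) \<Longrightarrow> lpre w u"
proof (induction w arbitrary: u)
  case Nil then show ?case by (simp add: lpre_def)
next
  case (Cons a w) then show ?case by (cases u) (auto simp: lpre_def)
qed

lemma mr_app: "maps_rigidly v u w \<Longrightarrow> maps_rigidly v (u @ r) (w @ r)"
  by (simp add: maps_rigidly_def prefix_app_append)

lemma mr_comp: "maps_rigidly f u v \<Longrightarrow> maps_rigidly g v w \<Longrightarrow> maps_rigidly (g \<circ> f) u w"
  by (simp add: maps_rigidly_def)

lemma mr_id[simp]: "maps_rigidly id u u" by (simp add: maps_rigidly_def)

lemma mr_inv: "bij g \<Longrightarrow> maps_rigidly g u w \<Longrightarrow> maps_rigidly (inv g) w u"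
  unfolding maps_rigidly_def by (metis bij_is_inj inv_f_f)

section \<open>Uniform rigidity and topology\<close>

definition Udep :: "(cantor \<Rightarrow> cantor) \<Rightarrow> nat \<Rightarrow> bool" where
  "Udep v N \<longleftrightarrow> (\<forall>u. length u = N \<longrightarrow> (\<exists>w. maps_rigidly v u w))"
definition Urig :: "(cantor \<Rightarrow> cantor) \<Rightarrow> bool" where
  "Urig v \<longleftrightarrow> (\<exists>N. Udep v N)"

lemma Udep_mono: assumes "Udep v N" "N \<le> M" shows "Udep v M"
  unfolding Udep_def
proof (intro allI impI)
  fix u :: "bool list" assume u: "length u = M"
  have "length (take N u) = N" using u assms(2) by simp
  then obtain w where "maps_rigidly v (take N u) w" using assms(1) unfolding Udep_def by blast
  then have "maps_rigidly v (take N u @ drop N u) (w @ drop N u)" by (rule mr_app)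
  then show "\<exists>w. maps_rigidly v u w" by auto
qed

lemma Urig_local: assumes "Urig v" shows "\<exists>w1 w2. x \<in> cone w1 \<and> maps_rigidly v w1 w2"
proof -
  obtain N where "Udep v N" using assms Urig_def by blast
  then obtain w where "maps_rigidly v (ptake N x) w" unfolding Udep_def using length_ptake by blast
  then show ?thesis using cone_iff pfx_ptake by blast
qed

lemma Urig_comp: assumes "Urig a" "Urig b" shows "Urig (a \<circ> b)"
proof -
  obtain N1 where N1: "Udep b N1" using assms Urig_def by blast
  obtain N2 where N2: "Udep a N2" using assms Urig_def by blast
  have "Udep (a \<circ> b) (N1 + N2)" unfolding Udep_def
  proof (intro allI impI)
    fix u :: "bool list" assume u: "length u = N1 + N2"
    have lt: "length (take N1 u) = N1" using u by simp
    obtain w1 where w1: "maps_rigidly b (take N1 u) w1" using N1 lt unfolding Udep_def by blast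
    have b: "maps_rigidly b u (w1 @ drop N1 u)" using mr_app[OF w1, of "drop N1 u"] by simp
    have len: "length (w1 @ drop N1 u) \<ge> N2" using u by simp
    have "Udep a (length (w1 @ drop N1 u))" using Udep_mono[OF N2 len] .
    then obtain w2 where "maps_rigidly a (w1 @ drop N1 u) w2" unfolding Udep_def by blast
    then show "\<exists>w. maps_rigidly (a \<circ> b) u w" using mr_comp[OF b] by blast
  qed
  then show ?thesis unfolding Urig_def by blast
qed

lemma finite_len_eq: "finite {u :: bool list. length u = N}"
  using finite_lists_length_eq[of "UNIV :: bool set" N] by simp

lemma Urig_inv: assumes bij: "bij v" and U: "Urig v" shows "Urig (inv v)"
proof -
  obtain N where N: "Udep v N" using U Urig_def by blast
  define sg where "sg u = (SOME w. maps_rigidly v u w)" for u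
  have sg: "maps_rigidly v u (sg u)" if "length u = N" for u
    using N that unfolding Udep_def sg_def by (metis someI_ex)
  define M where "M = Max ((\<lambda>u. length (sg u)) ` {u. length u = N})"
  have M: "length (sg u) \<le> M" if "length u = N" for u
    unfolding M_def using that finite_len_eq by (intro Max_ge) auto
  have "Udep (inv v) M" unfolding Udep_def
  proof (intro allI impI)
    fix w :: "bool list" assume w: "length w = M"
    define x where "x = prefix_app w (\<lambda>_. False)"
    define z where "z = inv v x"
    have vz: "v z = x" unfolding z_def using bij by (simp add: bij_is_surj surj_f_inv_f)
    define u where "u = ptake N z"
    define r0 where "r0 = sdrop N z"
    have z: "z = prefix_app u r0" unfolding u_def r0_def
      using pfx_decomp[OF pfx_ptake[of N z]] by simp
    have lu: "length u = N" unfolding u_def by simp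
    have "v (prefix_app u r0) = prefix_app (sg u) r0"
      using sg[OF lu] unfolding maps_rigidly_def by blast
    then have "prefix_app w (\<lambda>_. False) = prefix_app (sg u) r0" using vz x_def z by simp
    then have "pfx (sg u) (prefix_app w (\<lambda>_. False))" by (metis pfx_prefix_app)
    then have "lpre (sg u) w" using pfx_prefix_app_long M[OF lu] w by blast
    then obtain r where r: "w = sg u @ r" unfolding lpre_def by blast
    have "maps_rigidly (inv v) w (u @ r)"
      unfolding r by (rule mr_inv[OF bij mr_app[OF sg[OF lu]]])
    then show "\<exists>u. maps_rigidly (inv v) w u" by blast
  qed
  then show ?thesis unfolding Urig_def by blast
qed

lemma topspace_cantor[simp]: "topspace cantor_top = UNIV"
  by (simp add: cantor_top_def)

lemma openin_coord: "openin cantor_top {x. x i = c}"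
proof -
  have "openin cantor_top {x \<in> topspace cantor_top. x i \<in> {c}}"
    unfolding cantor_top_def
    by (rule openin_continuous_map_preimage[OF continuous_map_product_projection]) auto
  then show ?thesis by simp
qed

lemma openin_cyl: "openin cantor_top {y. \<forall>i<K. y i = x i}"
proof (induction K)
  case 0 then show ?case using openin_topspace[of cantor_top] by simp
next
  case (Suc K)
  have "{y. \<forall>i<Suc K. y i = x i} = {y. \<forall>i<K. y i = x i} \<inter> {y. y K = x K}"
    by (auto simp: less_Suc_eq)
  then show ?case using openin_Int[OF Suc openin_coord[of K "x K"]] by simp
qed

lemma openin_dep:
  assumes "\<And>x y. (\<forall>i<K. x i = y i) \<Longrightarrow> f x = f y"
  shows "openin cantor_top {x. f x \<in> A}"
proof -
  have "{x. f x \<in> A} = \<Union>((\<lambda>x. {y. \<forall>i<K. y i = x i}) ` {x. f x \<in> A})"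
  proof (intro equalityI subsetI)
    fix z assume "z \<in> {x. f x \<in> A}"
    then show "z \<in> \<Union>((\<lambda>x. {y. \<forall>i<K. y i = x i}) ` {x. f x \<in> A})" by blast
  next
    fix z assume "z \<in> \<Union>((\<lambda>x. {y. \<forall>i<K. y i = x i}) ` {x. f x \<in> A})"
    then obtain x where "f x \<in> A" "\<forall>i<K. z i = x i" by blast
    then show "z \<in> {x. f x \<in> A}" using assms[of z x] by simp
  qed
  moreover have "openin cantor_top (\<Union>((\<lambda>x. {y. \<forall>i<K. y i = x i}) ` {x. f x \<in> A}))"
    by (rule openin_Union) (use openin_cyl in blast)
  ultimately show ?thesis by simp
qed

lemma openin_cone: "openin cantor_top (cone w)"
proof -
  have "cone w = {x. pfx w x}" by (auto simp: cone_iff)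
  also have "\<dots> = {x. pfx w x \<in> {True}}" by simp
  also have "openin cantor_top \<dots>"
    by (rule openin_dep[of "length w"]) (simp add: pfx_def)
  finally show ?thesis .
qed

lemma Urig_continuous: assumes "Urig v" shows "continuous_map cantor_top cantor_top v"
proof -
  obtain N where N: "Udep v N" using assms Urig_def by blast
  have "continuous_map cantor_top (discrete_topology UNIV) (\<lambda>x. v x k)" for k
  proof -
    have dep: "v x k = v y k" if "\<forall>i<N + k + 1. x i = y i" for x y
    proof -
      have pt: "ptake N x = ptake N y" using that by (simp add: ptake_def)
      obtain w where w: "maps_rigidly v (ptake N x) w" using N length_ptake unfolding Udep_def by blast
      have x0: "x = prefix_app (ptake N x) (sdrop N x)"
        using pfx_decomp[OF pfx_ptake[of N x]] by simp
      have y0: "y = prefix_app (ptake N x) (sdrop N y)"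
        using pfx_decomp[OF pfx_ptake[of N y]] pt by simp
      have ex: "v (prefix_app (ptake N x) (sdrop N x)) = prefix_app w (sdrop N x)"
        using w unfolding maps_rigidly_def by blast
      have ey: "v (prefix_app (ptake N x) (sdrop N y)) = prefix_app w (sdrop N y)"
        using w unfolding maps_rigidly_def by blast
      have x: "v x = prefix_app w (sdrop N x)" using trans[OF arg_cong[OF x0, of v] ex] .
      have y: "v y = prefix_app w (sdrop N y)" using trans[OF arg_cong[OF y0, of v] ey] .
      show ?thesis unfolding x y using that by (simp add: prefix_app_def sdrop_def)
    qed
    show ?thesis unfolding continuous_map_def
    proof (intro conjI allI impI)
      show "(\<lambda>x. v x k) \<in> topspace cantor_top \<rightarrow> topspace (discrete_topology UNIV)" by simp
      fix U :: "bool set"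
      have "openin cantor_top {x. v x k \<in> U}" by (rule openin_dep[of "N + k + 1"], rule dep)
      then show "openin cantor_top {x \<in> topspace cantor_top. v x k \<in> U}" by simp
    qed
  qed
  then show ?thesis unfolding cantor_top_def
    using continuous_map_componentwise_UNIV by blast
qed

lemma compact_cantor: "compact_space cantor_top"
  unfolding cantor_top_def
  by (simp add: compact_space_product_topology compact_space_discrete_topology)

lemma local_Urig:
  assumes loc: "\<forall>x. \<exists>w1 w2. x \<in> cone w1 \<and> maps_rigidly v w1 w2"
  shows "Urig v"
proof -
  let ?U = "cone ` {w. \<exists>w2. maps_rigidly v w w2}"
  have cpt: "compactin cantor_top UNIV" using compact_cantor unfolding compact_space_def by simp
  have op: "\<forall>C\<in>?U. openin cantor_top C" using openin_cone by auto
  have cov: "UNIV \<subseteq> \<Union>?U" using loc by blast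
  have "\<exists>F. finite F \<and> F \<subseteq> ?U \<and> UNIV \<subseteq> \<Union>F"
    using cpt op cov unfolding compactin_def by (meson order_refl)
  then obtain F where F: "finite F" "F \<subseteq> ?U" "UNIV \<subseteq> \<Union>F" by blast
  obtain Fw where Fw: "Fw \<subseteq> {w. \<exists>w2. maps_rigidly v w w2}" "F = cone ` Fw" "finite Fw"
    using F(1,2) finite_subset_image by metis
  define N where "N = Max (length ` Fw)"
  have "Udep v N" unfolding Udep_def
  proof (intro allI impI)
    fix u :: "bool list" assume u: "length u = N"
    define x where "x = prefix_app u (\<lambda>_. False)"
    obtain w where C: "w \<in> Fw" "x \<in> cone w" using F(3) Fw(2) by blast
    have px: "pfx w x" using C(2) cone_iff by blast
    have "length w \<le> N" unfolding N_def using Fw(3) C(1) by (intro Max_ge) auto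
    then have "lpre w u" using px pfx_prefix_app_long u x_def by auto
    then obtain r where r: "u = w @ r" unfolding lpre_def by blast
    obtain w2 where "maps_rigidly v w w2" using Fw(1) C(1) by blast
    then show "\<exists>w. maps_rigidly v u w" using mr_app r by blast
  qed
  then show ?thesis unfolding Urig_def by blast
qed

lemma V_char: "v \<in> thompsonV \<longleftrightarrow> bij v \<and> Urig v"
proof
  assume v: "v \<in> thompsonV"
  then have h: "homeomorphic_map cantor_top cantor_top v" unfolding thompsonV_def by simp
  have "bij v" using homeomorphic_imp_surjective_map[OF h] homeomorphic_imp_injective_map[OF h]
    by (simp add: bij_def)
  moreover have "Urig v" using v local_Urig unfolding thompsonV_def by blast
  ultimately show "bij v \<and> Urig v" by simp
next
  assume a: "bij v \<and> Urig v"
  then have "Urig (inv v)" using Urig_inv by blast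
  then have "homeomorphic_maps cantor_top cantor_top v (inv v)"
  proof -
    have "inv v (v x) = x" for x using a by (simp add: bij_is_inj)
    moreover have "v (inv v x) = x" for x using a by (simp add: bij_is_surj surj_f_inv_f)
    ultimately show ?thesis unfolding homeomorphic_maps_def
      using a Urig_continuous \<open>Urig (inv v)\<close> by simp
  qed
  then have "homeomorphic_map cantor_top cantor_top v" using homeomorphic_map_maps by blast
  then show "v \<in> thompsonV" unfolding thompsonV_def using a Urig_local by blast
qed



lemma sdrop_0[simp]: "sdrop 0 x = x" by (simp add: sdrop_def)
lemma sdrop_Suc_scons[simp]: "sdrop (Suc n) (scons a y) = sdrop n y"
  by (rule ext) (simp add: sdrop_def)
lemma scons_cases: obtains a y where "x = scons a y"
  by (rule that[of "x 0" "stl x"]) simp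
lemma scons_cases2: obtains a b y where "x = scons a (scons b y)"
  by (rule that[of "x 0" "stl x 0" "stl (stl x)"]) simp

definition sig :: "cantor \<Rightarrow> cantor" where "sig x = scons (\<not> x 0) (stl x)"
definition Lm :: "(cantor \<Rightarrow> cantor) \<Rightarrow> cantor \<Rightarrow> cantor" where
  "Lm g x = (if x 0 then x else scons False (g (stl x)))"
definition Rm :: "(cantor \<Rightarrow> cantor) \<Rightarrow> cantor \<Rightarrow> cantor" where
  "Rm g x = (if x 0 then scons True (g (stl x)) else x)"
definition swp :: "bool list \<Rightarrow> bool list \<Rightarrow> cantor \<Rightarrow> cantor" where
  "swp a b x = (if pfx a x then prefix_app b (sdrop (length a) x)
     else if pfx b x then prefix_app a (sdrop (length b) x) else x)"
definition tau :: "cantor \<Rightarrow> cantor" where "tau = swp [False] [True, False]"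
definition Xm :: "cantor \<Rightarrow> cantor" where
  "Xm x = (if \<not> x 0 then scons False x else if \<not> stl x 0 then scons False (scons True (stl (stl x)))
     else stl x)"
definition rot :: "cantor \<Rightarrow> cantor" where
  "rot x = (if x 0 then scons True x else if stl x 0 then scons True (scons False (stl (stl x)))
     else stl x)"

lemma sig_scons[simp]: "sig (scons a y) = scons (\<not> a) y" by (simp add: sig_def)
lemma Lm_F[simp]: "Lm g (scons False y) = scons False (g y)" by (simp add: Lm_def)
lemma Lm_T[simp]: "Lm g (scons True y) = scons True y" by (simp add: Lm_def)
lemma Rm_F[simp]: "Rm g (scons False y) = scons False y" by (simp add: Rm_def)
lemma Rm_T[simp]: "Rm g (scons True y) = scons True (g y)" by (simp add: Rm_def)
lemma Xm_simps[simp]: "Xm (scons False y) = scons False (scons False y)"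
  "Xm (scons True (scons False y)) = scons False (scons True y)"
  "Xm (scons True (scons True y)) = scons True y"
  by (simp_all add: Xm_def)
lemma rot_simps[simp]: "rot (scons False (scons False y)) = scons False y"
  "rot (scons False (scons True y)) = scons True (scons False y)"
  "rot (scons True y) = scons True (scons True y)"
  by (simp_all add: rot_def)

lemma two_sided_bij: "f \<circ> g = id \<Longrightarrow> g \<circ> f = id \<Longrightarrow> bij f"
  using o_bij by blast

lemma sig_sig: "sig \<circ> sig = id"
  by (rule ext) (simp add: sig_def)
lemma Xm_rot: "Xm \<circ> rot = id"
proof (rule ext)
  fix x :: cantor obtain a b y where x: "x = scons a (scons b y)" by (rule scons_cases2)
  show "(Xm \<circ> rot) x = id x" unfolding x by (cases a; cases b) simp_all
qed
lemma rot_Xm: "rot \<circ> Xm = id"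
proof (rule ext)
  fix x :: cantor obtain a b y where x: "x = scons a (scons b y)" by (rule scons_cases2)
  show "(rot \<circ> Xm) x = id x" unfolding x by (cases a; cases b) simp_all
qed

lemma Lm_comp: "Lm (f \<circ> g) = Lm f \<circ> Lm g"
proof (rule ext)
  fix x :: cantor obtain a y where x: "x = scons a y" by (rule scons_cases)
  show "Lm (f \<circ> g) x = (Lm f \<circ> Lm g) x" unfolding x by (cases a) simp_all
qed
lemma Lm_id: "Lm id = id"
proof (rule ext)
  fix x :: cantor obtain a y where x: "x = scons a y" by (rule scons_cases)
  show "Lm id x = id x" unfolding x by (cases a) simp_all
qed
lemma Rm_conj: "Rm g = sig \<circ> Lm g \<circ> sig"
proof (rule ext)
  fix x :: cantor obtain a y where x: "x = scons a y" by (rule scons_cases)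
  show "Rm g x = (sig \<circ> Lm g \<circ> sig) x" unfolding x by (cases a) simp_all
qed
lemma LmLm: "Lm (Lm g) = Xm \<circ> Lm g \<circ> rot"
proof (rule ext)
  fix x :: cantor obtain a b y where x: "x = scons a (scons b y)" by (rule scons_cases2)
  show "Lm (Lm g) x = (Xm \<circ> Lm g \<circ> rot) x" unfolding x by (cases a; cases b) simp_all
qed

lemma Lm_bij: assumes "bij g" shows "bij (Lm g)" "inv (Lm g) = Lm (inv g)"
proof -
  have "g \<circ> inv g = id" using assms bij_is_surj surj_iff by blast
  then have 1: "Lm g \<circ> Lm (inv g) = id" by (simp add: Lm_comp[symmetric] Lm_id)
  have "inv g \<circ> g = id" using assms bij_is_inj inj_iff by blast
  then have 2: "Lm (inv g) \<circ> Lm g = id" by (simp add: Lm_comp[symmetric] Lm_id)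
  show "bij (Lm g)" using two_sided_bij[OF 1 2] .
  show "inv (Lm g) = Lm (inv g)" using 1 2 inv_unique_comp by blast
qed

definition incomp :: "bool list \<Rightarrow> bool list \<Rightarrow> bool" where
  "incomp a b \<longleftrightarrow> \<not> lpre a b \<and> \<not> lpre b a"

lemma incomp_pfx: assumes "incomp a b" shows "\<not> pfx a (prefix_app b r)"
proof
  assume p: "pfx a (prefix_app b r)"
  show False
  proof (cases "length a \<le> length b")
    case True then show False using p pfx_prefix_app_long assms incomp_def by blast
  next
    case False then show False using p pfx_prefix_app_short assms incomp_def
      by (meson nat_le_linear)
  qed
qed

lemma swp_invol: assumes "incomp a b" shows "swp a b \<circ> swp a b = id"
proof (rule ext)
  fix x
  have ab: "incomp b a" using assms incomp_def by blast
  show "(swp a b \<circ> swp a b) x = id x"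
  proof (cases "pfx a x")
    case True
    then obtain r where x: "x = prefix_app a r" using pfx_decomp by blast
    show ?thesis unfolding x using incomp_pfx[OF assms] by (simp add: swp_def)
  next
    case F: False
    show ?thesis
    proof (cases "pfx b x")
      case True
      then obtain r where x: "x = prefix_app b r" using pfx_decomp by blast
      have "\<not> pfx a (prefix_app b r)" using F x by simp
      then show ?thesis unfolding x by (simp add: swp_def)
    next
      case False then show ?thesis using F by (simp add: swp_def)
    qed
  qed
qed

lemma swp_bij: "incomp a b \<Longrightarrow> bij (swp a b)"
  using swp_invol two_sided_bij by blast

lemma tau_bij: "bij tau"
  unfolding tau_def by (rule swp_bij) (simp add: incomp_def lpre_def)

definition T0 :: "(cantor \<Rightarrow> cantor) set" where "T0 = {sig, tau, Xm, rot}"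
definition TT :: "(cantor \<Rightarrow> cantor) set" where "TT = T0 \<union> Lm ` T0"
definition Gs :: "(cantor \<Rightarrow> cantor) set" where
  "Gs = {word_eval l | l. set l \<subseteq> sym_gens TT}"

lemma finite_TT: "finite TT" by (simp add: TT_def T0_def)

lemma T0_bij: "t \<in> T0 \<Longrightarrow> bij t"
  unfolding T0_def using two_sided_bij[OF sig_sig sig_sig] tau_bij
    two_sided_bij[OF Xm_rot rot_Xm] two_sided_bij[OF rot_Xm Xm_rot] by auto

lemma TT_bij: "t \<in> TT \<Longrightarrow> bij t"
  unfolding TT_def using T0_bij Lm_bij by auto

lemma sym_bij: "t \<in> sym_gens TT \<Longrightarrow> bij t"
  unfolding sym_gens_def using TT_bij bij_imp_bij_inv by auto

lemma word_eval_Nil[simp]: "word_eval [] = id" by (simp add: word_eval_def)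
lemma word_eval_Cons[simp]: "word_eval (a # l) = a \<circ> word_eval l" by (simp add: word_eval_def)
lemma word_eval_append: "word_eval (l1 @ l2) = word_eval l1 \<circ> word_eval l2"
proof (induction l1)
  case Nil show ?case by simp
next
  case (Cons a l1) show ?case by (simp only: append_Cons word_eval_Cons Cons.IH comp_assoc)
qed

lemma Gs_id: "id \<in> Gs" unfolding Gs_def by (rule CollectI, rule exI[of _ "[]"]) simp
lemma Gs_comp: "f \<in> Gs \<Longrightarrow> g \<in> Gs \<Longrightarrow> f \<circ> g \<in> Gs"
  unfolding Gs_def
proof clarify
  fix l1 l2 assume "set l1 \<subseteq> sym_gens TT" "set l2 \<subseteq> sym_gens TT"
  then show "\<exists>l. word_eval l1 \<circ> word_eval l2 = word_eval l \<and> set l \<subseteq> sym_gens TT"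
    by (intro exI[of _ "l1 @ l2"]) (simp add: word_eval_append)
qed
lemma Gs_gen: "t \<in> sym_gens TT \<Longrightarrow> t \<in> Gs"
  unfolding Gs_def by (rule CollectI, rule exI[of _ "[t]"]) simp
lemma Gs_TT: "t \<in> TT \<Longrightarrow> t \<in> Gs" by (rule Gs_gen) (simp add: sym_gens_def)
lemma Gs_T0: "t \<in> T0 \<Longrightarrow> t \<in> Gs" by (rule Gs_TT) (simp add: TT_def)

lemma Gs_bij_inv_aux: "set l \<subseteq> sym_gens TT \<Longrightarrow> bij (word_eval l) \<and> inv (word_eval l) \<in> Gs"
proof (induction l)
  case Nil show ?case by (simp only: word_eval_Nil inv_id) (use Gs_id bij_id in blast)
next
  case (Cons a l)
  have a: "bij a" using Cons.prems sym_bij by auto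
  have ia: "inv a \<in> Gs"
  proof -
    have "a \<in> TT \<or> (\<exists>t\<in>TT. a = inv t)" using Cons.prems unfolding sym_gens_def by auto
    then show ?thesis
    proof
      assume "a \<in> TT" then show ?thesis by (intro Gs_gen) (simp add: sym_gens_def)
    next
      assume "\<exists>t\<in>TT. a = inv t"
      then obtain t where "t \<in> TT" "a = inv t" by blast
      then have "inv a = t" using TT_bij by (simp add: bij_is_inj bij_is_surj inv_inv_eq)
      then show ?thesis using \<open>t \<in> TT\<close> Gs_TT by simp
    qed
  qed
  have w: "bij (word_eval l)" "inv (word_eval l) \<in> Gs" using Cons by auto
  have eq: "inv (a \<circ> word_eval l) = inv (word_eval l) \<circ> inv a"
    using a w(1) by (simp add: o_inv_distrib)
  have "bij (a \<circ> word_eval l)" using bij_comp[OF w(1) a] .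
  moreover have "inv (a \<circ> word_eval l) \<in> Gs" unfolding eq by (rule Gs_comp[OF w(2) ia])
  ultimately show ?case by (simp only: word_eval_Cons)
qed

lemma Gs_obtain: assumes "g \<in> Gs" obtains l where "set l \<subseteq> sym_gens TT" "g = word_eval l"
  using assms unfolding Gs_def by blast
lemma Gs_bij: "g \<in> Gs \<Longrightarrow> bij g" using Gs_bij_inv_aux by (metis Gs_obtain)
lemma Gs_inv: "g \<in> Gs \<Longrightarrow> inv g \<in> Gs" using Gs_bij_inv_aux by (metis Gs_obtain)

lemma Gs_Lm_gen: assumes "a \<in> sym_gens TT" shows "Lm a \<in> Gs"
proof -
  have LT: "Lm t \<in> Gs" if tT: "t \<in> TT" for t
  proof (cases "t \<in> T0")
    case True then show ?thesis using Gs_TT TT_def by auto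
  next
    case False
    then obtain t0 where t0: "t0 \<in> T0" "t = Lm t0" using tT unfolding TT_def by blast
    have "Lm t = Xm \<circ> Lm t0 \<circ> rot" using t0 LmLm by simp
    moreover have "Xm \<in> Gs" "rot \<in> Gs" "Lm t0 \<in> Gs" using Gs_T0 Gs_TT t0 TT_def T0_def by auto
    ultimately show ?thesis using Gs_comp by simp
  qed
  have "a \<in> TT \<or> (\<exists>t\<in>TT. a = inv t)" using assms unfolding sym_gens_def by auto
  then show ?thesis
  proof
    assume "a \<in> TT" then show ?thesis using LT by simp
  next
    assume "\<exists>t\<in>TT. a = inv t"
    then obtain t where t: "t \<in> TT" "a = inv t" by blast
    have "Lm a = inv (Lm t)" using t Lm_bij[of t] TT_bij by simp
    then show ?thesis using Gs_inv LT t by simp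
  qed
qed

lemma Gs_Lm: "g \<in> Gs \<Longrightarrow> Lm g \<in> Gs"
proof -
  have "set l \<subseteq> sym_gens TT \<Longrightarrow> Lm (word_eval l) \<in> Gs" for l
  proof (induction l)
    case Nil show ?case by (simp only: word_eval_Nil Lm_id Gs_id)
  next
    case (Cons a l)
    have "Lm a \<in> Gs" using Cons.prems by (intro Gs_Lm_gen) simp
    moreover have "Lm (word_eval l) \<in> Gs" using Cons by simp
    ultimately show ?case by (simp only: word_eval_Cons Lm_comp Gs_comp)
  qed
  then show "g \<in> Gs \<Longrightarrow> Lm g \<in> Gs" unfolding Gs_def by auto
qed

lemma Gs_sig: "sig \<in> Gs" using Gs_T0 T0_def by auto
lemma Gs_tau: "tau \<in> Gs" using Gs_T0 T0_def by auto
lemma Gs_Xm: "Xm \<in> Gs" using Gs_T0 T0_def by auto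
lemma Gs_rot: "rot \<in> Gs" using Gs_T0 T0_def by auto

lemma Gs_Rm: "g \<in> Gs \<Longrightarrow> Rm g \<in> Gs"
  unfolding Rm_conj by (intro Gs_comp Gs_Lm Gs_sig)



section \<open>Trees and the vine\<close>

datatype tr = Lf | Nd tr tr

fun lvs :: "tr \<Rightarrow> bool list list" where
  "lvs Lf = [[]]"
| "lvs (Nd a b) = map (Cons False) (lvs a) @ map (Cons True) (lvs b)"

fun vn :: "nat \<Rightarrow> tr" where
  "vn 0 = Lf"
| "vn (Suc k) = Nd Lf (vn k)"

lemma length_lvs_vn[simp]: "length (lvs (vn k)) = Suc k" by (induction k) auto
lemma length_lvs_pos: "length (lvs t) \<ge> 1" by (induction t) auto
lemma distinct_lvs: "distinct (lvs t)"
  by (induction t) (auto simp: distinct_map)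

lemma lpre_simps[simp]: "lpre [] w" "\<not> lpre (a # u) []"
  "lpre (a # u) (b # w) \<longleftrightarrow> a = b \<and> lpre u w"
  by (auto simp: lpre_def)

lemma lvs_prefree: "u \<in> set (lvs t) \<Longrightarrow> w \<in> set (lvs t) \<Longrightarrow> lpre u w \<Longrightarrow> u = w"
  by (induction t arbitrary: u w) auto

lemma list_all2_mapI: "(\<And>x. x \<in> set xs \<Longrightarrow> P (f x) (g x)) \<Longrightarrow> list_all2 P (map f xs) (map g xs)"
  by (induction xs) auto

lemma mr_Lm: "maps_rigidly g u w \<Longrightarrow> maps_rigidly (Lm g) (False # u) (False # w)"
  by (simp add: maps_rigidly_def)
lemma mr_Lm_fix: "maps_rigidly (Lm g) (True # u) (True # u)"
  by (simp add: maps_rigidly_def)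
lemma mr_Rm: "maps_rigidly g u w \<Longrightarrow> maps_rigidly (Rm g) (True # u) (True # w)"
  by (simp add: maps_rigidly_def)
lemma mr_Rm_fix: "maps_rigidly (Rm g) (False # u) (False # u)"
  by (simp add: maps_rigidly_def)
lemma mr_rot: "maps_rigidly rot (False # False # u) (False # u)"
  "maps_rigidly rot (False # True # u) (True # False # u)"
  "maps_rigidly rot (True # u) (True # True # u)"
  by (simp_all add: maps_rigidly_def)

lemma LA_Lm: "list_all2 (maps_rigidly g) us ws \<Longrightarrow>
  list_all2 (maps_rigidly (Lm g)) (map (Cons False) us) (map (Cons False) ws)"
  by (induction rule: list_all2_induct) (auto simp: mr_Lm)
lemma LA_Rm: "list_all2 (maps_rigidly g) us ws \<Longrightarrow>
  list_all2 (maps_rigidly (Rm g)) (map (Cons True) us) (map (Cons True) ws)"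
  by (induction rule: list_all2_induct) (auto simp: mr_Rm)
lemma LA_Lm_fix: "list_all2 (maps_rigidly (Lm g)) (map (Cons True) us) (map (Cons True) us)"
  by (induction us) (auto simp: mr_Lm_fix)
lemma LA_Rm_fix: "list_all2 (maps_rigidly (Rm g)) (map (Cons False) us) (map (Cons False) us)"
  by (induction us) (auto simp: mr_Rm_fix)
lemma mr_id'[simp]: "maps_rigidly (\<lambda>a. a) u u" by (simp add: maps_rigidly_def)
lemma LA_id[simp]: "list_all2 (maps_rigidly id) us us"
  by (induction us) (simp_all only: list_all2_Cons list_all2_Nil mr_id simp_thms)
lemma LA_id'[simp]: "list_all2 (maps_rigidly (\<lambda>a. a)) us us"
  by (induction us) (simp_all only: list_all2_Cons list_all2_Nil mr_id' simp_thms)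
lemma LA_comp: "list_all2 (maps_rigidly f) us vs \<Longrightarrow> list_all2 (maps_rigidly g) vs ws \<Longrightarrow>
  list_all2 (maps_rigidly (g \<circ> f)) us ws"
  by (rule list_all2_trans[OF mr_comp])

lemma merge: "\<exists>h\<in>Gs. list_all2 (maps_rigidly h) (lvs (Nd (vn p) (vn q))) (lvs (vn (Suc (p + q))))"
proof (induction p)
  case 0 show ?case by (intro bexI[of _ id]) (simp_all add: Gs_id)
next
  case (Suc p)
  then obtain h where h: "h \<in> Gs"
    "list_all2 (maps_rigidly h) (lvs (Nd (vn p) (vn q))) (lvs (vn (Suc (p + q))))" by blast
  have e1: "lvs (Nd (vn (Suc p)) (vn q)) = [False, False] #
     (map (\<lambda>u. False # True # u) (lvs (vn p)) @ map (\<lambda>u. True # u) (lvs (vn q)))" by simp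
  have e2: "[False] # map (Cons True) (lvs (Nd (vn p) (vn q))) = [False] #
     (map (\<lambda>u. True # False # u) (lvs (vn p)) @ map (\<lambda>u. True # True # u) (lvs (vn q)))" by simp
  have 1: "list_all2 (maps_rigidly rot) (lvs (Nd (vn (Suc p)) (vn q)))
     ([False] # map (Cons True) (lvs (Nd (vn p) (vn q))))"
    unfolding e1 e2 using mr_rot(1)[of "[]"]
    by (simp only: list_all2_Cons) (intro conjI list_all2_appendI list_all2_mapI mr_rot; simp)
  have 2: "list_all2 (maps_rigidly (Rm h)) ([False] # map (Cons True) (lvs (Nd (vn p) (vn q))))
      ([False] # map (Cons True) (lvs (vn (Suc (p + q)))))"
    using LA_Rm[OF h(2)] mr_Rm_fix[of h "[]"] by (simp only: list_all2_Cons)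
  have e3: "lvs (vn (Suc (Suc p + q))) = [False] # map (Cons True) (lvs (vn (Suc (p + q))))" by simp
  have "Rm h \<circ> rot \<in> Gs" by (rule Gs_comp[OF Gs_Rm[OF h(1)] Gs_rot])
  then show ?case using LA_comp[OF 1 2] unfolding e3 by blast
qed

lemma to_vine: "\<exists>g\<in>Gs. list_all2 (maps_rigidly g) (lvs s) (lvs (vn (length (lvs s) - 1)))"
proof (induction s)
  case Lf show ?case by (intro bexI[of _ id]) (simp_all add: Gs_id)
next
  case (Nd a b)
  define p where "p = length (lvs a) - 1"
  define q where "q = length (lvs b) - 1"
  obtain ga where ga: "ga \<in> Gs" "list_all2 (maps_rigidly ga) (lvs a) (lvs (vn p))"
    using Nd.IH(1) p_def by blast
  obtain gb where gb: "gb \<in> Gs" "list_all2 (maps_rigidly gb) (lvs b) (lvs (vn q))"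
    using Nd.IH(2) q_def by blast
  have 1: "list_all2 (maps_rigidly (Rm gb)) (lvs (Nd a b))
      (map (Cons False) (lvs a) @ map (Cons True) (lvs (vn q)))"
    using LA_Rm_fix LA_Rm[OF gb(2)] by (simp add: list_all2_appendI)
  have 2: "list_all2 (maps_rigidly (Lm ga)) (map (Cons False) (lvs a) @ map (Cons True) (lvs (vn q)))
      (lvs (Nd (vn p) (vn q)))"
    using LA_Lm_fix LA_Lm[OF ga(2)] by (simp add: list_all2_appendI)
  obtain h where h: "h \<in> Gs" "list_all2 (maps_rigidly h) (lvs (Nd (vn p) (vn q))) (lvs (vn (Suc (p + q))))"
    using merge by blast
  have len: "length (lvs (Nd a b)) - 1 = Suc (p + q)"
    using length_lvs_pos[of a] length_lvs_pos[of b] p_def q_def by simp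
  have "h \<circ> (Lm ga \<circ> Rm gb) \<in> Gs" by (rule Gs_comp[OF h(1) Gs_comp[OF Gs_Lm[OF ga(1)] Gs_Rm[OF gb(1)]]])
  then show ?case using LA_comp[OF LA_comp[OF 1 2] h(2)] unfolding len by blast
qed

lemma swp_sig: "swp [False] [True] = sig"
proof (rule ext)
  fix x :: cantor obtain a y where x: "x = scons a y" by (rule scons_cases)
  show "swp [False] [True] x = sig x" unfolding x by (cases a) (simp_all add: swp_def)
qed

lemma swp_step: "swp [False] (True # True # u) =
   Rm (swp [False] (True # u)) \<circ> tau \<circ> Rm (swp [False] (True # u))"
proof (rule ext)
  fix x :: cantor obtain a b y where x: "x = scons a (scons b y)" by (rule scons_cases2)
  show "swp [False] (True # True # u) x = (Rm (swp [False] (True # u)) \<circ> tau \<circ> Rm (swp [False] (True # u))) x"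
  proof (cases "a \<and> b \<and> pfx u y")
    case True
    then obtain r where "y = prefix_app u r" using pfx_decomp by blast
    with True show ?thesis unfolding x by (simp add: swp_def tau_def)
  next
    case False then show ?thesis unfolding x by (cases a; cases b) (auto simp: swp_def tau_def)
  qed
qed

lemma P_swp: "u \<in> set (lvs (vn k)) \<Longrightarrow> swp [False] (True # u) \<in> Gs"
proof (induction k arbitrary: u)
  case 0 then show ?case using swp_sig Gs_sig by simp
next
  case (Suc k)
  then have "u = [False] \<or> (\<exists>u'. u = True # u' \<and> u' \<in> set (lvs (vn k)))" by auto
  then show ?case
  proof
    assume "u = [False]" then show ?thesis using Gs_tau tau_def by simp
  next
    assume "\<exists>u'. u = True # u' \<and> u' \<in> set (lvs (vn k))"
    then obtain u' where u': "u = True # u'" "u' \<in> set (lvs (vn k))" by blast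
    have sG: "swp [False] (True # u') \<in> Gs" using Suc.IH u'(2) by blast
    show ?thesis unfolding u'(1) swp_step
      by (rule Gs_comp[OF Gs_comp[OF Gs_Rm[OF sG] Gs_tau] Gs_Rm[OF sG]])
  qed
qed

lemma scons_split0: "g x 0 = False \<Longrightarrow> g x = scons False (stl (g x))"
  by (rule ext) (auto simp: scons_def stl_def split: nat.split)

lemma vperm: "bij h \<Longrightarrow> (\<forall>z\<in>set (lvs (vn k)). \<exists>w\<in>set (lvs (vn k)). maps_rigidly h z w) \<Longrightarrow> h \<in> Gs"
proof (induction k arbitrary: h)
  case 0
  then have "maps_rigidly h [] []" by simp
  then have "\<forall>y. h y = y" by (simp add: maps_rigidly_def)
  then have "h = id" by auto
  then show ?case using Gs_id by (simp only:)
next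
  case (Suc k)
  let ?S = "set (lvs (vn k))"
  let ?L = "set (lvs (vn (Suc k)))"
  have leaves: "?L = insert [False] (Cons True ` ?S)" by auto
  have C1: "g \<in> Gs" if g: "bij g" "\<forall>z\<in>?L. \<exists>w\<in>?L. maps_rigidly g z w"
    "maps_rigidly g [False] [False]" for g
  proof -
    have ginj: "g a = g b \<Longrightarrow> a = b" for a b using g(1) bij_is_inj injD by metis
    have gF: "g (scons False y) = scons False y" for y using g(3) by (simp add: maps_rigidly_def)
    have gT: "g (scons True y) 0 = True" for y
    proof (rule ccontr)
      assume "\<not> g (scons True y) 0 = True"
      then have "g (scons True y) = scons False (stl (g (scons True y)))"
        by (intro scons_split0) simp
      also have "\<dots> = g (scons False (stl (g (scons True y))))" using gF by simp
      finally have "scons True y = scons False (stl (g (scons True y)))" by (rule ginj)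
      then show False by simp
    qed
    define h' where "h' y = stl (g (scons True y))" for y
    have g_eq: "g = Rm h'"
    proof (rule ext)
      fix x :: cantor obtain a y where x: "x = scons a y" by (rule scons_cases)
      show "g x = Rm h' x"
      proof (cases a)
        case True
        have "Rm h' x = scons True (stl (g (scons True y)))" by (simp add: x True h'_def)
        also have "\<dots> = scons (g (scons True y) 0) (stl (g (scons True y)))" using gT by simp
        also have "\<dots> = g x" by (simp only: scons_stl x True)
        finally show ?thesis by simp
      next
        case False then show ?thesis using gF x by simp
      qed
    qed
    have bij': "bij h'"
    proof (rule bijI)
      show "inj h'"
      proof (rule injI)
        fix a b assume "h' a = h' b"
        then have "g (scons True a) = g (scons True b)" unfolding g_eq by simp
        then have "scons True a = scons True b" by (rule ginj)
        then show "a = b" by simp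
      qed
      show "surj h'"
      proof (rule surjI[of _ "\<lambda>z. stl (inv g (scons True z))"])
        fix z
        define x where "x = inv g (scons True z)"
        have gx: "g x = scons True z" unfolding x_def using g(1) by (simp add: bij_is_surj surj_f_inv_f)
        obtain c y where x': "x = scons c y" by (rule scons_cases)
        have "c = True"
        proof (rule ccontr)
          assume "c \<noteq> True" then have "g x = scons False y" using gF x' by simp
          then show False using gx by simp
        qed
        then have "g x = scons True (h' y)" unfolding g_eq x' by simp
        then show "h' (stl (inv g (scons True z))) = z" using gx x' x_def by simp
      qed
    qed
    have cond': "\<forall>z\<in>?S. \<exists>w\<in>?S. maps_rigidly h' z w"
    proof
      fix z assume z: "z \<in> ?S"
      then have "True # z \<in> ?L" by simp
      then obtain w where w: "w \<in> ?L" "maps_rigidly g (True # z) w" using g(2) by blast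
      have "w \<noteq> [False]"
      proof
        assume "w = [False]"
        then have "g (scons True (prefix_app z y)) = g (scons False y)" for y
          using w(2) gF by (simp add: maps_rigidly_def)
        then show False using ginj by fastforce
      qed
      then obtain w' where w': "w = True # w'" "w' \<in> ?S" using w(1) by auto
      have "maps_rigidly h' z w'" using w(2) unfolding w'(1) maps_rigidly_def h'_def by simp
      then show "\<exists>w\<in>?S. maps_rigidly h' z w" using w'(2) by blast
    qed
    have "h' \<in> Gs" using Suc.IH[OF bij' cond'] .
    then show ?thesis using g_eq Gs_Rm by simp
  qed
  obtain w0 where w0: "w0 \<in> ?L" "maps_rigidly h [False] w0" using Suc.prems by auto
  show ?case
  proof (cases "w0 = [False]")
    case True then show ?thesis using C1 Suc.prems w0 by blast
  next
    case False
    then obtain u0 where u0: "u0 \<in> ?S" "w0 = True # u0" using w0(1) by auto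
    define t where "t = swp [False] (True # u0)"
    have tG: "t \<in> Gs" using P_swp u0 t_def by blast
    have inc: "incomp [False] (True # u0)" by (simp add: incomp_def)
    have tb: "bij t" using swp_bij[OF inc] t_def by simp
    have t1: "maps_rigidly t [False] (True # u0)"
      by (simp add: maps_rigidly_def t_def swp_def)
    have t2: "maps_rigidly t (True # u0) [False]"
      by (simp add: maps_rigidly_def t_def swp_def)
    have t3: "maps_rigidly t (True # u') (True # u')" if "u' \<in> ?S" "u' \<noteq> u0" for u'
    proof -
      have "incomp u0 u'" using lvs_prefree u0(1) that unfolding incomp_def by metis
      then have "\<not> pfx u0 (prefix_app u' y)" for y using incomp_pfx by blast
      then show ?thesis by (simp add: maps_rigidly_def t_def swp_def)
    qed
    have cond2: "\<forall>z\<in>?L. \<exists>w\<in>?L. maps_rigidly (t \<circ> h) z w"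
    proof
      fix z assume "z \<in> ?L"
      then obtain w where w: "w \<in> ?L" "maps_rigidly h z w" using Suc.prems by blast
      show "\<exists>w\<in>?L. maps_rigidly (t \<circ> h) z w"
      proof (cases "w = [False]")
        case True then show ?thesis using mr_comp[OF w(2)[unfolded True] t1] u0(1) by auto
      next
        case False
        then obtain u' where u': "w = True # u'" "u' \<in> ?S" using w(1) by auto
        show ?thesis
        proof (cases "u' = u0")
          case True then show ?thesis using mr_comp[OF w(2)[unfolded u'(1) True] t2] by auto
        next
          case False then show ?thesis using mr_comp[OF w(2)[unfolded u'(1)] t3[OF u'(2) False]] u' by auto
        qed
      qed
    qed
    have "maps_rigidly (t \<circ> h) [False] [False]" using mr_comp[OF w0(2)[unfolded u0(2)] t2] .
    then have "t \<circ> h \<in> Gs" using C1 bij_comp[OF Suc.prems(1) tb] cond2 by blast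
    then have "inv t \<circ> (t \<circ> h) \<in> Gs" by (rule Gs_comp[OF Gs_inv[OF tG]])
    moreover have "inv t \<circ> (t \<circ> h) = h" using tb
      by (simp add: comp_assoc[symmetric] bij_is_inj inv_o_cancel)
    ultimately show ?thesis by simp
  qed
qed



section \<open>Prefix codes are leaf sets of trees\<close>

lemma code_tree:
  "(\<forall>w\<in>W. length w \<le> n) \<Longrightarrow> (\<forall>a\<in>W. \<forall>b\<in>W. lpre a b \<longrightarrow> a = b) \<Longrightarrow> (\<forall>x. \<exists>w\<in>W. pfx w x)
   \<Longrightarrow> \<exists>t. set (lvs t) = W"
proof (induction n arbitrary: W)
  case 0
  obtain w where "w \<in> W" using 0(3) by blast
  then have "W = {[]}" using 0(1) by auto
  then show ?case by (intro exI[of _ Lf]) simp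
next
  case (Suc n)
  show ?case
  proof (cases "[] \<in> W")
    case True
    have "x = []" if "x \<in> W" for x using Suc.prems(2) True that lpre_simps(1)[of x] by blast
    then have "W = {[]}" using True by blast
    then show ?thesis by (intro exI[of _ Lf]) simp
  next
    case False
    define W0 where "W0 = {w. False # w \<in> W}"
    define W1 where "W1 = {w. True # w \<in> W}"
    have compl: "\<forall>x. \<exists>w\<in>{w. c # w \<in> W}. pfx w x" for c
    proof
      fix x
      obtain w where w: "w \<in> W" "pfx w (scons c x)" using Suc.prems(3) by blast
      then obtain d w' where "w = d # w'" using False by (cases w) auto
      then show "\<exists>w\<in>{w. c # w \<in> W}. pfx w x" using w by auto
    qed
    have pf: "\<forall>a\<in>{w. c # w \<in> W}. \<forall>b\<in>{w. c # w \<in> W}. lpre a b \<longrightarrow> a = b" for c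
    proof (intro ballI impI)
      fix a b assume ab: "a \<in> {w. c # w \<in> W}" "b \<in> {w. c # w \<in> W}" "lpre a b"
      then have "lpre (c # a) (c # b)" by simp
      then have "c # a = c # b" using Suc.prems(2) ab(1,2) by blast
      then show "a = b" by simp
    qed
    have ln: "\<forall>w\<in>{w. c # w \<in> W}. length w \<le> n" for c using Suc.prems(1) by fastforce
    have "\<exists>t. set (lvs t) = W0" unfolding W0_def by (rule Suc.IH[OF ln pf compl])
    then obtain t0 where t0: "set (lvs t0) = W0" by blast
    have "\<exists>t. set (lvs t) = W1" unfolding W1_def by (rule Suc.IH[OF ln pf compl])
    then obtain t1 where t1: "set (lvs t1) = W1" by blast
    have "set (lvs (Nd t0 t1)) = W"
    proof (intro equalityI subsetI)
      fix w assume "w \<in> set (lvs (Nd t0 t1))"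
      then show "w \<in> W" using t0 t1 W0_def W1_def by auto
    next
      fix w assume w: "w \<in> W"
      then obtain d w' where "w = d # w'" using False by (cases w) auto
      then show "w \<in> set (lvs (Nd t0 t1))" using w t0 t1 W0_def W1_def by (cases d) auto
    qed
    then show ?thesis by blast
  qed
qed

lemma lpre_same_len: "lpre u w \<Longrightarrow> length u = length w \<Longrightarrow> u = w"
  by (auto simp: lpre_def)

lemma prefix_app_same_len:
  assumes "length u = length u'" "prefix_app u y = prefix_app u' y'" shows "u = u'"
proof -
  have "pfx u (prefix_app u' y')" using pfx_prefix_app[of u y] unfolding assms(2) .
  then have "lpre u u'" using pfx_prefix_app_long assms(1) by simp
  then show ?thesis using lpre_same_len assms(1) by blast
qed

lemma V_sub_Gs: assumes "v \<in> thompsonV" shows "v \<in> Gs"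
proof -
  have bv: "bij v" and "Urig v" using assms V_char by auto
  then obtain N where N: "Udep v N" using Urig_def by blast
  have vinj: "v a = v b \<Longrightarrow> a = b" for a b using injD[OF bij_is_inj[OF bv]] .
  define D where "D = {u :: bool list. length u = N}"
  define sg where "sg u = (SOME w. maps_rigidly v u w)" for u
  have sg: "maps_rigidly v u (sg u)" if "u \<in> D" for u
  proof -
    have "\<exists>w. maps_rigidly v u w" using N that unfolding Udep_def D_def by blast
    then show ?thesis unfolding sg_def by (rule someI_ex)
  qed
  define W where "W = sg ` D"
  have finD: "finite D" using finite_len_eq D_def by simp
  then have finW: "finite W" unfolding W_def by simp
  define M where "M = Max (length ` W)"
  have sginj: "inj_on sg D"
  proof (rule inj_onI)
    fix u u' assume u: "u \<in> D" "u' \<in> D" "sg u = sg u'"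
    have "v (prefix_app u y) = v (prefix_app u' y)" for y
      using sg[OF u(1)] sg[OF u(2)] u(3) unfolding maps_rigidly_def by simp
    then have "prefix_app u (\<lambda>_. False) = prefix_app u' (\<lambda>_. False)" using vinj by blast
    then show "u = u'" using prefix_app_same_len u D_def by simp
  qed
  have "\<exists>t. set (lvs t) = D"
  proof (rule code_tree[of D N])
    show "\<forall>w\<in>D. length w \<le> N" unfolding D_def by simp
    show "\<forall>a\<in>D. \<forall>b\<in>D. lpre a b \<longrightarrow> a = b" unfolding D_def using lpre_same_len by auto
    show "\<forall>x. \<exists>w\<in>D. pfx w x" unfolding D_def using pfx_ptake length_ptake by blast
  qed
  then obtain ts where ts: "set (lvs ts) = D" by blast
  have "\<exists>t. set (lvs t) = W"
  proof (rule code_tree[of W M])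
    show "\<forall>w\<in>W. length w \<le> M" unfolding M_def using finW by auto
    show "\<forall>a\<in>W. \<forall>b\<in>W. lpre a b \<longrightarrow> a = b"
    proof (intro ballI impI)
      fix a b assume ab: "a \<in> W" "b \<in> W" "lpre a b"
      obtain u where u: "u \<in> D" "a = sg u" using ab(1) W_def by blast
      obtain u' where u': "u' \<in> D" "b = sg u'" using ab(2) W_def by blast
      obtain r where r: "b = a @ r" using ab(3) lpre_def by blast
      have e: "sg u' = sg u @ r" using r u(2) u'(2) by simp
      have "v (prefix_app u' y) = v (prefix_app u (prefix_app r y))" for y
      proof -
        have "v (prefix_app u' y) = prefix_app (sg u) (prefix_app r y)"
          using sg[OF u'(1)] unfolding maps_rigidly_def e prefix_app_append by blast
        also have "\<dots> = v (prefix_app u (prefix_app r y))"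
          using sg[OF u(1)] unfolding maps_rigidly_def by simp
        finally show ?thesis .
      qed
      then have "prefix_app u' (\<lambda>_. False) = prefix_app u (prefix_app r (\<lambda>_. False))" using vinj by blast
      then have "u' = u" using prefix_app_same_len u u' D_def by simp
      then show "a = b" using u u' by simp
    qed
    show "\<forall>x. \<exists>w\<in>W. pfx w x"
    proof
      fix x :: cantor
      define z where "z = inv v x"
      have vz: "v z = x" unfolding z_def using bv by (simp add: bij_is_surj surj_f_inv_f)
      define u where "u = ptake N z"
      define r0 where "r0 = sdrop N z"
      have z: "z = prefix_app u r0" unfolding u_def r0_def
        using pfx_decomp[OF pfx_ptake[of N z]] by simp
      have uD: "u \<in> D" unfolding u_def D_def by simp
      have "v (prefix_app u r0) = prefix_app (sg u) r0"
        using sg[OF uD] unfolding maps_rigidly_def by blast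
      then have "x = prefix_app (sg u) r0" using vz z by simp
      then have "pfx (sg u) x" by simp
      moreover have "sg u \<in> W" using uD W_def by blast
      ultimately show "\<exists>w\<in>W. pfx w x" by blast
    qed
  qed
  then obtain tt where tt: "set (lvs tt) = W" by blast
  have lts: "length (lvs ts) = card D" using distinct_card[OF distinct_lvs[of ts]] ts by simp
  have ltt: "length (lvs tt) = card D" using distinct_card[OF distinct_lvs[of tt]] tt W_def
    card_image[OF sginj] by simp
  define n where "n = length (lvs ts) - 1"
  obtain g1 where g1: "g1 \<in> Gs" "list_all2 (maps_rigidly g1) (lvs ts) (lvs (vn n))"
    using to_vine n_def by blast
  obtain g2 where g2: "g2 \<in> Gs" "list_all2 (maps_rigidly g2) (lvs tt) (lvs (vn n))"
    using to_vine[of tt] n_def lts ltt by auto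
  have b1: "bij g1" using Gs_bij g1(1) by blast
  have b2: "bij g2" using Gs_bij g2(1) by blast
  define h where "h = g2 \<circ> v \<circ> inv g1"
  have cond: "\<forall>z\<in>set (lvs (vn n)). \<exists>w\<in>set (lvs (vn n)). maps_rigidly h z w"
  proof
    fix z assume "z \<in> set (lvs (vn n))"
    then obtain i where i: "i < length (lvs (vn n))" "z = lvs (vn n) ! i" unfolding in_set_conv_nth by blast
    have l1: "length (lvs ts) = length (lvs (vn n))" using g1(2) list_all2_lengthD by blast
    have m1: "maps_rigidly g1 (lvs ts ! i) z" using g1(2) i l1 by (simp add: list_all2_conv_all_nth)
    have m1': "maps_rigidly (inv g1) z (lvs ts ! i)" using mr_inv[OF b1 m1] .
    have "lvs ts ! i \<in> set (lvs ts)" using i l1 by simp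
    then have "lvs ts ! i \<in> D" using ts by simp
    then have m2: "maps_rigidly v (lvs ts ! i) (sg (lvs ts ! i))" using sg by blast
    have "sg (lvs ts ! i) \<in> set (lvs tt)" using tt W_def \<open>lvs ts ! i \<in> D\<close> by blast
    then obtain j where j: "j < length (lvs tt)" "sg (lvs ts ! i) = lvs tt ! j" unfolding in_set_conv_nth by metis
    have l2: "length (lvs tt) = length (lvs (vn n))" using g2(2) list_all2_lengthD by blast
    have m3: "maps_rigidly g2 (lvs tt ! j) (lvs (vn n) ! j)" using g2(2) j l2
      by (simp add: list_all2_conv_all_nth)
    have "maps_rigidly h z (lvs (vn n) ! j)"
      unfolding h_def using mr_comp[OF m1' mr_comp[OF m2[unfolded j(2)] m3]] by (simp add: comp_assoc)
    then show "\<exists>w\<in>set (lvs (vn n)). maps_rigidly h z w" using j l2 by auto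
  qed
  have bh: "bij h" unfolding h_def using b1 b2 bv by (intro bij_comp bij_imp_bij_inv)
  have hG: "h \<in> Gs" using vperm[OF bh cond] .
  have "v = inv g2 \<circ> h \<circ> g1"
  proof (rule ext)
    fix x
    show "v x = (inv g2 \<circ> h \<circ> g1) x" unfolding h_def using b1 b2
      by (simp add: bij_is_inj)
  qed
  then show ?thesis using Gs_comp[OF Gs_comp[OF Gs_inv[OF g2(1)] hG] g1(1)] by simp
qed

lemma Urig_len1: assumes "\<And>a. \<exists>w. maps_rigidly f [a] w" shows "Urig f"
  unfolding Urig_def Udep_def
proof (intro exI[of _ 1] allI impI)
  fix u :: "bool list" assume "length u = 1"
  then obtain a where "u = [a]" by (auto simp: length_Suc_conv)
  then show "\<exists>w. maps_rigidly f u w" using assms by blast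
qed

lemma Urig_len2: assumes "\<And>a b. \<exists>w. maps_rigidly f [a, b] w" shows "Urig f"
  unfolding Urig_def Udep_def
proof (intro exI[of _ 2] allI impI)
  fix u :: "bool list" assume "length u = 2"
  then obtain a b where "u = [a, b]"
    by (auto simp: length_Suc_conv numeral_2_eq_2)
  then show "\<exists>w. maps_rigidly f u w" using assms by blast
qed

lemma Urig_sig: "Urig sig"
  by (rule Urig_len1, rule_tac x="[\<not> a]" in exI) (simp add: maps_rigidly_def)

lemma Urig_Xm: "Urig Xm"
proof (rule Urig_len2)
  fix a b
  show "\<exists>w. maps_rigidly Xm [a, b] w"
    by (rule exI[of _ "if a then (if b then [True] else [False, True]) else [False, False, b]"])
      (cases a; cases b; simp add: maps_rigidly_def)
qed

lemma Urig_rot: "Urig rot"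
proof (rule Urig_len2)
  fix a b
  show "\<exists>w. maps_rigidly rot [a, b] w"
    by (rule exI[of _ "if a then [True, True, b] else (if b then [True, False] else [False])"])
      (cases a; cases b; simp add: maps_rigidly_def)
qed

lemma Urig_tau: "Urig tau"
proof (rule Urig_len2)
  fix a b
  show "\<exists>w. maps_rigidly tau [a, b] w"
    by (rule exI[of _ "if a then (if b then [True, True] else [False]) else [True, False, b]"])
      (cases a; cases b; simp add: maps_rigidly_def tau_def swp_def)
qed

lemma Urig_Lm: assumes "Urig g" shows "Urig (Lm g)"
proof -
  obtain N where N: "Udep g N" using assms Urig_def by blast
  have "Udep (Lm g) (Suc N)" unfolding Udep_def
  proof (intro allI impI)
    fix u :: "bool list" assume "length u = Suc N"
    then obtain a u' where u: "u = a # u'" "length u' = N" by (auto simp: length_Suc_conv)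
    show "\<exists>w. maps_rigidly (Lm g) u w"
    proof (cases a)
      case True then show ?thesis using mr_Lm_fix[of g u'] u(1) by auto
    next
      case False
      obtain w where "maps_rigidly g u' w" using N u(2) Udep_def by blast
      then show ?thesis using mr_Lm[of g u' w] False u(1) by auto
    qed
  qed
  then show ?thesis using Urig_def by blast
qed

lemma T0_Urig: "t \<in> T0 \<Longrightarrow> Urig t"
  unfolding T0_def using Urig_sig Urig_tau Urig_Xm Urig_rot by auto

lemma TT_V: "t \<in> TT \<Longrightarrow> t \<in> thompsonV"
  unfolding V_char TT_def using T0_Urig T0_bij Urig_Lm Lm_bij by auto

lemma sym_V: "t \<in> sym_gens TT \<Longrightarrow> t \<in> thompsonV"
  unfolding sym_gens_def using TT_V V_char Urig_inv bij_imp_bij_inv by auto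

lemma V_comp: "f \<in> thompsonV \<Longrightarrow> g \<in> thompsonV \<Longrightarrow> f \<circ> g \<in> thompsonV"
  unfolding V_char using bij_comp Urig_comp by blast

lemma V_id: "id \<in> thompsonV"
proof -
  have "Udep id 0" unfolding Udep_def using mr_id by blast
  then show ?thesis unfolding V_char Urig_def by auto
qed

lemma Gs_sub_V: "g \<in> Gs \<Longrightarrow> g \<in> thompsonV"
proof -
  have "set l \<subseteq> sym_gens TT \<Longrightarrow> word_eval l \<in> thompsonV" for l
  proof (induction l)
    case Nil show ?case using V_id by (simp only: word_eval_Nil)
  next
    case (Cons a l)
    then have "a \<in> thompsonV" "word_eval l \<in> thompsonV" using sym_V by auto
    then show ?case by (simp only: word_eval_Cons V_comp)
  qed
  then show "g \<in> Gs \<Longrightarrow> g \<in> thompsonV" by (elim Gs_obtain) simp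
qed

lemma V_eq_Gs: "thompsonV = Gs" using V_sub_Gs Gs_sub_V by blast

theorem part1: "finite TT \<and> generates_V TT"
  unfolding generates_V_def using finite_TT TT_V V_eq_Gs Gs_def by blast



section \<open>Periods as a conjugacy invariant\<close>

definition minper :: "(cantor \<Rightarrow> cantor) \<Rightarrow> cantor \<Rightarrow> nat \<Rightarrow> bool" where
  "minper g x p \<longleftrightarrow> 0 < p \<and> (g ^^ p) x = x \<and> (\<forall>q. 0 < q \<and> q < p \<longrightarrow> (g ^^ q) x \<noteq> x)"
definition Per :: "(cantor \<Rightarrow> cantor) \<Rightarrow> nat set" where
  "Per g = {p. \<exists>x. minper g x p}"

lemma conj_pow0: assumes "bij k" "\<And>x. c x = k (g (inv k x))"
  shows "(c ^^ q) x = k ((g ^^ q) (inv k x))"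
proof (induction q arbitrary: x)
  case 0 show ?case using assms by (simp add: bij_is_surj surj_f_inv_f)
next
  case (Suc q)
  have "(c ^^ Suc q) x = c ((c ^^ q) x)" by simp
  also have "\<dots> = c (k ((g ^^ q) (inv k x)))" by (simp only: Suc.IH)
  also have "\<dots> = k (g ((g ^^ q) (inv k x)))" using assms by (simp add: bij_is_inj)
  finally show ?case by simp
qed

lemma conj_pow: assumes "bij k"
  shows "((k \<circ> g \<circ> inv k) ^^ q) x = k ((g ^^ q) (inv k x))"
  by (rule conj_pow0[OF assms]) simp

lemma Per_conj: assumes "bij k" shows "Per (k \<circ> g \<circ> inv k) = Per g"
proof -
  have eqv: "((k \<circ> g \<circ> inv k) ^^ q) x = x \<longleftrightarrow> (g ^^ q) (inv k x) = inv k x" for q x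
  proof -
    have "((k \<circ> g \<circ> inv k) ^^ q) x = x \<longleftrightarrow> k ((g ^^ q) (inv k x)) = k (inv k x)"
      using conj_pow[OF assms] assms by (simp add: bij_is_surj surj_f_inv_f)
    also have "\<dots> \<longleftrightarrow> (g ^^ q) (inv k x) = inv k x" using assms bij_is_inj inj_eq by metis
    finally show ?thesis .
  qed
  have m: "minper (k \<circ> g \<circ> inv k) x p \<longleftrightarrow> minper g (inv k x) p" for x p
    unfolding minper_def using eqv by simp
  show ?thesis unfolding Per_def
  proof (intro equalityI subsetI; clarsimp)
    fix p x assume "minper (k \<circ> g \<circ> inv k) x p"
    then show "\<exists>x. minper g x p" using m by blast
  next
    fix p x assume "minper g x p"
    then have "minper (k \<circ> g \<circ> inv k) (k x) p" using m assms by (simp add: bij_is_inj)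
    then show "\<exists>x. minper (k \<circ> g \<circ> inv k) x p" by blast
  qed
qed

lemma Lm_pow: "(Lm g ^^ q) = Lm (g ^^ q)"
proof (induction q)
  case 0 show ?case by (simp only: funpow.simps(1) Lm_id)
next
  case (Suc q) then show ?case by (simp only: funpow.simps(2) Lm_comp)
qed

lemma Per_Lm: "Per (Lm g) = insert 1 (Per g)"
proof -
  have F: "minper (Lm g) (scons False y) p \<longleftrightarrow> minper g y p" for y p
    unfolding minper_def Lm_pow by simp
  have fx: "(Lm g ^^ q) (scons True y) = scons True y" for q y unfolding Lm_pow by simp
  have T: "minper (Lm g) (scons True y) p \<longleftrightarrow> p = 1" for y p
    by (simp add: minper_def fx; presburger)
  show ?thesis unfolding Per_def
  proof (intro equalityI subsetI)
    fix p assume "p \<in> {p. \<exists>x. minper (Lm g) x p}"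
    then obtain x where x: "minper (Lm g) x p" by blast
    obtain a y where "x = scons a y" by (rule scons_cases)
    then show "p \<in> insert 1 {p. \<exists>x. minper g x p}" using x F T by (cases a) auto
  next
    fix p assume "p \<in> insert 1 {p. \<exists>x. minper g x p}"
    then show "p \<in> {p. \<exists>x. minper (Lm g) x p}" using F T by blast
  qed
qed

definition Phi :: "(cantor \<Rightarrow> cantor) \<Rightarrow> cantor \<Rightarrow> cantor" where
  "Phi g x = sig (Lm g x)"
lemma Phi_eq: "sig \<circ> Lm g = Phi g" by (rule ext) (simp add: Phi_def)
lemma Phi_simps[simp]: "Phi g (scons False y) = scons True (g y)" "Phi g (scons True y) = scons False y"
  by (simp_all add: Phi_def)

lemma Phi_two: "(Phi g) ((Phi g) (scons a y)) = scons a (g y)"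
  by (cases a) simp_all

lemma Phi_bit: "(Phi g) z 0 = (\<not> z 0)"
proof -
  obtain a y where "z = scons a y" by (rule scons_cases)
  then show ?thesis by (cases a) simp_all
qed

lemma Phi_even: "((Phi g) ^^ (2 * m)) (scons a y) = scons a ((g ^^ m) y)"
proof (induction m)
  case 0 show ?case by simp
next
  case (Suc m)
  have "((Phi g) ^^ (2 * Suc m)) (scons a y) =
     (Phi g) ((Phi g) (((Phi g) ^^ (2 * m)) (scons a y)))" by simp
  also have "\<dots> = scons a (g ((g ^^ m) y))" unfolding Suc Phi_two ..
  finally show ?case by simp
qed

lemma Phi_odd: "((Phi g) ^^ Suc (2 * m)) (scons a y) \<noteq> scons a y"
proof -
  have "((Phi g) ^^ Suc (2 * m)) (scons a y) 0 = (\<not> a)"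
    using Phi_bit Phi_even by simp
  then show ?thesis by (metis scons_0)
qed

lemma Per_Phi: "Per (Phi g) = (\<lambda>m. 2 * m) ` Per g"
proof -
  let ?P = "Phi g"
  have key: "minper ?P (scons a y) p \<longleftrightarrow> (\<exists>m. p = 2 * m \<and> minper g y m)" for a y p
  proof
    assume mp: "minper ?P (scons a y) p"
    have "even p"
    proof (rule ccontr)
      assume "odd p" then obtain m where "p = Suc (2 * m)" by (metis oddE Suc_eq_plus1)
      moreover have "(?P ^^ p) (scons a y) = scons a y" using mp unfolding minper_def by simp
      ultimately show False using Phi_odd by simp
    qed
    then obtain m where p: "p = 2 * m" by (rule evenE)
    have "minper g y m" unfolding minper_def
    proof (intro conjI allI impI)
      show "0 < m" using mp p unfolding minper_def by simp
      show "(g ^^ m) y = y" using mp p Phi_even unfolding minper_def by simp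
      fix q assume q: "0 < q \<and> q < m"
      show "(g ^^ q) y \<noteq> y"
      proof
        assume "(g ^^ q) y = y"
        then have "(?P ^^ (2 * q)) (scons a y) = scons a y" using Phi_even by simp
        then show False using mp q p unfolding minper_def by auto
      qed
    qed
    then show "\<exists>m. p = 2 * m \<and> minper g y m" using p by blast
  next
    assume "\<exists>m. p = 2 * m \<and> minper g y m"
    then obtain m where p: "p = 2 * m" and m: "minper g y m" by blast
    show "minper ?P (scons a y) p" unfolding minper_def
    proof (intro conjI allI impI)
      show "0 < p" using m p unfolding minper_def by simp
      show "(?P ^^ p) (scons a y) = scons a y" using m p Phi_even unfolding minper_def by simp
      fix q assume q: "0 < q \<and> q < p"
      show "(?P ^^ q) (scons a y) \<noteq> scons a y"
      proof (cases "even q")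
        case True
        then obtain q' where q': "q = 2 * q'" by (rule evenE)
        then have "(g ^^ q') y \<noteq> y" using m q p unfolding minper_def by auto
        then show ?thesis using q' Phi_even by simp
      next
        case False
        then obtain q' where "q = Suc (2 * q')" by (metis oddE Suc_eq_plus1)
        then show ?thesis using Phi_odd by simp
      qed
    qed
  qed
  show ?thesis unfolding Per_def
  proof (intro equalityI subsetI)
    fix p assume "p \<in> {p. \<exists>x. minper ?P x p}"
    then obtain x where x: "minper ?P x p" by blast
    obtain a y where "x = scons a y" by (rule scons_cases)
    then show "p \<in> (\<lambda>m. 2 * m) ` {p. \<exists>x. minper g x p}" using x key by blast
  next
    fix p assume "p \<in> (\<lambda>m. 2 * m) ` {p. \<exists>x. minper g x p}"
    then obtain m y where "p = 2 * m" "minper g y m" by blast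
    then have "minper ?P (scons False y) p" using key by blast
    then show "p \<in> {p. \<exists>x. minper ?P x p}" by blast
  qed
qed

lemma Per_id: "Per id = {1}"
proof -
  have "minper id x p \<longleftrightarrow> p = 1" for x p by (simp add: minper_def; presburger)
  then show ?thesis unfolding Per_def by auto
qed

fun GG :: "bool list \<Rightarrow> cantor \<Rightarrow> cantor" where
  "GG [] = id"
| "GG (b # bs) = (if b then sig \<circ> Lm (GG bs) else Lm (GG bs))"

fun EE :: "bool list \<Rightarrow> nat set" where
  "EE [] = {0}"
| "EE (b # bs) = (if b then Suc ` EE bs else insert 0 (EE bs))"

lemma Per_GG: "Per (GG bs) = (\<lambda>e. 2 ^ e) ` EE bs"
proof (induction bs)
  case Nil
  have "Per (GG []) = {1}" using Per_id by (simp only: GG.simps)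
  then show ?case by (simp add: id_def)
next
  case (Cons b bs)
  show ?case
  proof (cases b)
    case True
    then have "Per (GG (b # bs)) = (\<lambda>m. 2 * m) ` ((\<lambda>e. 2 ^ e) ` EE bs)"
      using Per_Phi Cons by (simp add: Phi_eq)
    also have "\<dots> = (\<lambda>e. 2 ^ e) ` EE (b # bs)" using True by (simp add: image_image)
    finally show ?thesis .
  next
    case False
    then show ?thesis using Per_Lm Cons by simp
  qed
qed

fun code :: "bool list \<Rightarrow> bool list" where
  "code [] = []"
| "code (a # as) = (if a then [False, True] else [True]) @ code as"

lemma EE_code: "EE (code (a # as)) = (if a then insert 0 (Suc ` EE (code as)) else Suc ` EE (code as))"
  by simp

lemma length_code: "length (code as) \<le> 2 * length as"
  by (induction as) auto

lemma EE_code_inj: "EE (code as) = EE (code bs) \<Longrightarrow> length as = length bs \<Longrightarrow> as = bs"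
proof (induction as arbitrary: bs)
  case Nil then show ?case by simp
next
  case (Cons a as)
  then obtain b bs' where bs: "bs = b # bs'" by (cases bs) auto
  have z: "0 \<in> EE (code (c # cs)) \<longleftrightarrow> c" for c cs by simp
  have ab: "a = b" using Cons.prems(1) z[of a as] z[of b bs'] bs by simp
  have rm: "EE (code (c # cs)) - {0} = Suc ` EE (code cs)" for c cs by auto
  have "Suc ` EE (code as) = Suc ` EE (code bs')"
    using rm[of a as] rm[of b bs'] Cons.prems(1) bs by simp
  then have "EE (code as) = EE (code bs')" by (simp add: inj_image_eq_iff)
  then have "as = bs'" using Cons.IH Cons.prems(2) bs by simp
  then show ?case using ab bs by simp
qed

fun wL :: "bool list \<Rightarrow> (cantor \<Rightarrow> cantor) list" where
  "wL [] = []"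
| "wL (b # bs) = (if b then [Lm sig] else []) @ [Xm] @ wL bs @ [rot]"

fun wG :: "bool list \<Rightarrow> (cantor \<Rightarrow> cantor) list" where
  "wG [] = []"
| "wG (b # bs) = (if b then [sig] else []) @ wL bs"

lemma word_eval_wL: "word_eval (wL bs) = Lm (GG bs)"
proof (induction bs)
  case Nil show ?case by (simp only: wL.simps word_eval_Nil GG.simps Lm_id)
next
  case (Cons b bs)
  have h: "Xm \<circ> word_eval (wL bs @ [rot]) = Lm (Lm (GG bs))"
    by (simp only: word_eval_append Cons LmLm word_eval_Cons word_eval_Nil comp_id comp_assoc)
  show ?case
  proof (cases b)
    case True then show ?thesis
      by (simp only: wL.simps if_True append.simps word_eval_Cons h GG.simps Lm_comp)
  next
    case False then show ?thesis
      by (simp only: wL.simps if_False append.simps word_eval_Cons h GG.simps)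
  qed
qed

lemma word_eval_wG: "word_eval (wG bs) = GG bs"
proof (cases bs)
  case Nil then show ?thesis by (simp only: wG.simps word_eval_Nil GG.simps)
next
  case (Cons b bs')
  then show ?thesis
    by (cases b) (simp_all only: wG.simps if_True if_False append.simps word_eval_Cons
        word_eval_wL GG.simps)
qed

lemma set_wG: "set (wG bs) \<subseteq> {sig, Lm sig, Xm, rot}"
proof -
  have "set (wL bs) \<subseteq> {sig, Lm sig, Xm, rot}" for bs by (induction bs) auto
  then show ?thesis by (cases bs) auto
qed

lemma length_wG: "length (wG bs) \<le> 3 * length bs + 1"
proof -
  have w: "length (wL bs) \<le> 3 * length bs" for bs by (induction bs) auto
  show ?thesis
  proof (cases bs)
    case Nil then show ?thesis by simp
  next
    case (Cons b bs') then show ?thesis using w[of bs'] by simp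
  qed
qed

lemma GG_Gs: "GG bs \<in> Gs"
proof (induction bs)
  case Nil show ?case using Gs_id by (simp only: GG.simps)
next
  case (Cons b bs)
  then show ?case using Gs_comp[OF Gs_sig Gs_Lm[OF Cons]] Gs_Lm[OF Cons] by simp
qed



section \<open>Counting conjugacy classes\<close>

lemma sym_gens_finite: "finite S \<Longrightarrow> finite (sym_gens S)" by (simp add: sym_gens_def)

lemma gen_word: assumes "generates_V S" "g \<in> thompsonV"
  shows "\<exists>l. set l \<subseteq> sym_gens S \<and> word_eval l = g"
proof -
  have e: "thompsonV = {word_eval l |l. set l \<subseteq> sym_gens S}" using assms(1) generates_V_def by blast
  have "g \<in> {word_eval l |l. set l \<subseteq> sym_gens S}" using assms(2) by (subst e[symmetric])
  then show ?thesis by blast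
qed

lemma wl_witness: assumes "generates_V S" "g \<in> thompsonV"
  shows "\<exists>l. set l \<subseteq> sym_gens S \<and> word_eval l = g \<and> length l = word_length S g"
proof -
  have "\<exists>l. set l \<subseteq> sym_gens S \<and> word_eval l = g" using gen_word[OF assms] .
  then have ex: "\<exists>n. \<exists>l. length l = n \<and> set l \<subseteq> sym_gens S \<and> word_eval l = g" by blast
  show ?thesis using LeastI_ex[OF ex] unfolding word_length_def by blast
qed

lemma wl_le: "set l \<subseteq> sym_gens S \<Longrightarrow> word_eval l = g \<Longrightarrow> word_length S g \<le> length l"
  unfolding word_length_def by (rule Least_le) blast

definition cls :: "(cantor \<Rightarrow> cantor) set \<Rightarrow> nat \<Rightarrow> (cantor \<Rightarrow> cantor) set set" where
  "cls S n = {conj_class g | g. g \<in> thompsonV \<and> word_length S g \<le> n}"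

lemma conj_growth_cls: "conj_growth S n = card (cls S n)"
  by (simp add: conj_growth_def cls_def)

lemma cls_sub: assumes "generates_V S"
  shows "cls S n \<subseteq> conj_class ` word_eval ` {l. set l \<subseteq> sym_gens S \<and> length l \<le> n}"
proof
  fix C assume "C \<in> cls S n"
  then obtain g where g: "C = conj_class g" "g \<in> thompsonV" "word_length S g \<le> n"
    unfolding cls_def by blast
  obtain l where "set l \<subseteq> sym_gens S" "word_eval l = g" "length l = word_length S g"
    using wl_witness[OF assms g(2)] by blast
  then show "C \<in> conj_class ` word_eval ` {l. set l \<subseteq> sym_gens S \<and> length l \<le> n}"
    using g by force
qed

lemma cls_finite: assumes "finite S" "generates_V S" shows "finite (cls S n)"
  using finite_subset[OF cls_sub[OF assms(2)]]
    finite_lists_length_le[OF sym_gens_finite[OF assms(1)]] by blast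

lemma cls_mono: "n \<le> m \<Longrightarrow> cls S n \<subseteq> cls S m"
  unfolding cls_def by auto

lemma sum_pow_le: "(\<Sum>i\<le>n. (a::nat) ^ i) \<le> (a + 1) ^ n"
proof (induction n)
  case 0 show ?case by simp
next
  case (Suc n)
  have "a ^ n \<le> (a + 1) ^ n" by (rule power_mono) auto
  then have m: "a * a ^ n \<le> a * (a + 1) ^ n" by (rule mult_left_mono) simp
  have "(\<Sum>i\<le>Suc n. a ^ i) = (\<Sum>i\<le>n. a ^ i) + a * a ^ n" by simp
  also have "\<dots> \<le> (a + 1) ^ n + a * (a + 1) ^ n" using Suc m by (rule add_mono)
  also have "\<dots> = (a + 1) ^ Suc n" by (simp add: algebra_simps)
  finally show ?case .
qed

lemma upper: assumes "finite S" "generates_V S"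
  shows "conj_growth S n \<le> (card (sym_gens S) + 1) ^ n"
proof -
  let ?L = "{l. set l \<subseteq> sym_gens S \<and> length l \<le> n}"
  have fL: "finite ?L" using finite_lists_length_le[OF sym_gens_finite[OF assms(1)]] .
  have "conj_growth S n \<le> card (conj_class ` word_eval ` ?L)"
    unfolding conj_growth_cls using cls_sub[OF assms(2)] fL by (intro card_mono) auto
  also have "\<dots> \<le> card (word_eval ` ?L)" by (rule card_image_le) (use fL in simp)
  also have "\<dots> \<le> card ?L" by (rule card_image_le[OF fL])
  also have "\<dots> = (\<Sum>i\<le>n. card (sym_gens S) ^ i)"
    by (rule card_lists_length_le[OF sym_gens_finite[OF assms(1)]])
  also have "\<dots> \<le> (card (sym_gens S) + 1) ^ n" by (rule sum_pow_le)
  finally show ?thesis .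
qed

definition Zs :: "(cantor \<Rightarrow> cantor) set" where "Zs = {sig, Lm sig, Xm, rot}"

lemma Zs_V: "Zs \<subseteq> thompsonV"
  unfolding Zs_def V_eq_Gs using Gs_sig Gs_Lm[OF Gs_sig] Gs_Xm Gs_rot by auto

lemma translate: assumes "generates_V S"
  shows "\<exists>M. \<forall>l. set l \<subseteq> Zs \<longrightarrow> (\<exists>l'. set l' \<subseteq> sym_gens S \<and> length l' \<le> M * length l \<and> word_eval l' = word_eval l)"
proof -
  have ex: "\<exists>lz. set lz \<subseteq> sym_gens S \<and> word_eval lz = z" if "z \<in> Zs" for z
    using gen_word[OF assms] Zs_V that by blast
  define f where "f z = (SOME lz. set lz \<subseteq> sym_gens S \<and> word_eval lz = z)" for z
  have f: "set (f z) \<subseteq> sym_gens S \<and> word_eval (f z) = z" if "z \<in> Zs" for z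
    unfolding f_def using someI_ex[OF ex[OF that]] .
  define M where "M = Max ((\<lambda>z. length (f z)) ` Zs)"
  have M: "length (f z) \<le> M" if "z \<in> Zs" for z
    unfolding M_def using that by (intro Max_ge) (auto simp: Zs_def)
  have "set l \<subseteq> Zs \<longrightarrow> (\<exists>l'. set l' \<subseteq> sym_gens S \<and> length l' \<le> M * length l \<and> word_eval l' = word_eval l)" for l
  proof (induction l)
    case Nil show ?case by (intro impI exI[of _ "[]"]) simp
  next
    case (Cons a l)
    show ?case
    proof
      assume al: "set (a # l) \<subseteq> Zs"
      then obtain l' where l': "set l' \<subseteq> sym_gens S" "length l' \<le> M * length l" "word_eval l' = word_eval l"
        using Cons.IH by auto
      have a: "a \<in> Zs" using al by simp
      have "set (f a @ l') \<subseteq> sym_gens S" using f[OF a] l'(1) by simp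
      moreover have "length (f a @ l') \<le> M * length (a # l)" using M[OF a] l'(2) by simp
      moreover have "word_eval (f a @ l') = word_eval (a # l)"
        using f[OF a] l'(3) by (simp only: word_eval_append word_eval_Cons)
      ultimately show "\<exists>l'. set l' \<subseteq> sym_gens S \<and> length l' \<le> M * length (a # l) \<and> word_eval l' = word_eval (a # l)"
        by blast
    qed
  qed
  then show ?thesis by blast
qed

lemma id_conj: "g \<in> conj_class g"
proof -
  have "g = id \<circ> g \<circ> inv id" by (simp only: inv_id comp_id id_comp)
  then show ?thesis unfolding conj_class_def using V_id by blast
qed

lemma conj_Per: assumes "conj_class g1 = conj_class g2" shows "Per g1 = Per g2"
proof -
  have "g2 \<in> conj_class g1" using assms id_conj by simp
  then obtain k where k: "k \<in> thompsonV" "g2 = k \<circ> g1 \<circ> inv k" unfolding conj_class_def by blast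
  have "bij k" using k(1) V_char by blast
  then show ?thesis using Per_conj k(2) by simp
qed

lemma lower: assumes "finite S" "generates_V S"
  shows "\<exists>M. \<forall>m. 2 ^ m \<le> conj_growth S (M * (6 * m + 1))"
proof -
  obtain M where M: "\<forall>l. set l \<subseteq> Zs \<longrightarrow> (\<exists>l'. set l' \<subseteq> sym_gens S \<and> length l' \<le> M * length l \<and> word_eval l' = word_eval l)"
    using translate[OF assms(2)] by blast
  have "2 ^ m \<le> conj_growth S (M * (6 * m + 1))" for m
  proof -
    let ?K = "M * (6 * m + 1)"
    define A where "A = {as :: bool list. set as \<subseteq> UNIV \<and> length as = m}"
    define F where "F as = conj_class (GG (code as))" for as
    have cA: "card A = 2 ^ m" unfolding A_def
      using card_lists_length_eq[of "UNIV :: bool set" m] by simp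
    have sub: "F ` A \<subseteq> cls S ?K"
    proof
      fix C assume "C \<in> F ` A"
      then obtain as where as: "as \<in> A" "C = F as" by blast
      let ?g = "GG (code as)"
      have gV: "?g \<in> thompsonV" using GG_Gs V_eq_Gs by blast
      have "set (wG (code as)) \<subseteq> Zs" using set_wG unfolding Zs_def by blast
      then obtain l' where l': "set l' \<subseteq> sym_gens S" "length l' \<le> M * length (wG (code as))"
        "word_eval l' = word_eval (wG (code as))" using M by blast
      have "length (wG (code as)) \<le> 6 * m + 1"
        using length_wG[of "code as"] length_code[of as] as(1) A_def by simp
      then have "M * length (wG (code as)) \<le> ?K" by (rule mult_left_mono) simp
      then have "word_length S ?g \<le> ?K"
        using wl_le[OF l'(1)] l'(2,3) word_eval_wG by (metis le_trans)
      then show "C \<in> cls S ?K" unfolding cls_def as(2) F_def using gV by blast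
    qed
    have inj: "inj_on F A"
    proof (rule inj_onI)
      fix as bs assume ab: "as \<in> A" "bs \<in> A" "F as = F bs"
      have "Per (GG (code as)) = Per (GG (code bs))" using ab(3) unfolding F_def by (rule conj_Per)
      then have "(\<lambda>e. (2::nat) ^ e) ` EE (code as) = (\<lambda>e. 2 ^ e) ` EE (code bs)" by (simp add: Per_GG)
      moreover have "inj (\<lambda>e. (2::nat) ^ e)" by (rule injI) simp
      ultimately have "EE (code as) = EE (code bs)" by (simp add: inj_image_eq_iff)
      then show "as = bs" using EE_code_inj ab A_def by simp
    qed
    have "2 ^ m = card (F ` A)" using cA card_image[OF inj] by simp
    also have "\<dots> \<le> card (cls S ?K)" by (rule card_mono[OF cls_finite[OF assms] sub])
    finally show ?thesis unfolding conj_growth_cls .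
  qed
  then show ?thesis by blast
qed

lemma le_cx: assumes "0 < (c::nat)" shows "x \<le> c * x + c"
proof -
  have "1 * x \<le> c * x" using assms by (intro mult_le_mono1) simp
  then have "x \<le> c * x" by (simp only: mult_1)
  then show ?thesis by (rule trans_le_add1)
qed

theorem part2: assumes "finite S" "generates_V S"
  shows "growth_equiv (conj_growth S) (\<lambda>n. 2 ^ n)"
  unfolding growth_equiv_def
proof
  define c where "c = card (sym_gens S) + 1"
  show "growth_le (conj_growth S) (\<lambda>n. 2 ^ n)" unfolding growth_le_def
  proof (intro exI[of _ c] conjI allI)
    show "0 < c" unfolding c_def by simp
    fix n
    have "conj_growth S n \<le> c ^ n" using upper[OF assms] c_def by simp
    also have "\<dots> \<le> (2 ^ c) ^ n" by (rule power_mono) (simp_all add: less_exp less_imp_le)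
    also have "\<dots> = 2 ^ (c * n)" by (simp add: power_mult)
    also have "\<dots> \<le> 2 ^ (c * n + c)" by (rule power_increasing) simp_all
    also have "\<dots> \<le> c * 2 ^ (c * n + c) + c" using \<open>0 < c\<close> by (rule le_cx)
    finally show "conj_growth S n \<le> c * 2 ^ (c * n + c) + c" .
  qed
next
  obtain M where M: "\<forall>m. 2 ^ m \<le> conj_growth S (M * (6 * m + 1))" using lower[OF assms] by blast
  define c where "c = 7 * M + 1"
  show "growth_le (\<lambda>n. 2 ^ n) (conj_growth S)" unfolding growth_le_def
  proof (intro exI[of _ c] conjI allI)
    show "0 < c" unfolding c_def by simp
    fix n
    have le: "M * (6 * n + 1) \<le> c * n + c" unfolding c_def by (simp add: algebra_simps)
    have "(2::nat) ^ n \<le> conj_growth S (M * (6 * n + 1))" using M by blast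
    also have "\<dots> \<le> conj_growth S (c * n + c)"
      unfolding conj_growth_cls by (rule card_mono[OF cls_finite[OF assms] cls_mono[OF le]])
    also have "\<dots> \<le> c * conj_growth S (c * n + c) + c" using \<open>0 < c\<close> by (rule le_cx)
    finally show "2 ^ n \<le> c * conj_growth S (c * n + c) + c" .
  qed
qed

theorem mainTheorem8:
  shows "(\<exists>S. finite S \<and> generates_V S) \<and>
    (\<forall>S. finite S \<and> generates_V S \<longrightarrow> growth_equiv (conj_growth S) (\<lambda>n. 2 ^ n))"
  using part1 part2 by blast


end
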